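(* Let $n\ge 3$, $J\subseteq\{1,\dots,n\}$ nonempty, $r_k>0$ for $k\in J$, $\mathcal X(J)=\bigcup_{k\in J}\frac{r_k}{\sqrt k}\mathcal I^n_k$, and $w$ a positive weight function constant (value $w_k$) on each $\frac{r_k}{\sqrt k}\mathcal I^n_k$. Then (1) $(\mathcal X(J),w)$ is at least a Euclidean $3$-design for any $J$, $R=\{r_k\}$ and $w$; and (2) there are no choices of $J$, $R$ and $w$ for which $(\mathcal X(J),w)$ is a Euclidean $9$-design.
   Context: $\mathcal I^n_k$ is the set of vectors in $\{-1,0,1\}^n$ with exactly $k$ nonzero entries. For finite $\mathcal X\subset\mathbb R^n\setminus\{0\}$ with positive weights $w$, $R=\{\|x\|\}$ and $W_r=\sum_{\|x\|=r}w(x)$, $(\mathcal X,w)$ is a Euclidean $t$-design if $\sum_{r\in R}W_r\overline f_{S^{n-1}_r}=\sum_{x\in\mathcal X}w(x)f(x)$ for all real polynomials $f$ of degree $\le t$, where $\overline f_{S^{n-1}_r}$ is the average of $f$ over the sphere of radius $r$ centered at the origin. *)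

theory Defs
  imports "HOL-Analysis.Analysis"
begin

definition monomial_fun :: "('n::finite \<Rightarrow> nat) \<Rightarrow> real^'n \<Rightarrow> real" where
  "monomial_fun \<alpha> x = (\<Prod>i\<in>UNIV. (x $ i) ^ (\<alpha> i))"

definition poly_fun_deg_le :: "nat \<Rightarrow> (real^'n::finite \<Rightarrow> real) \<Rightarrow> bool" where
  "poly_fun_deg_le t f \<longleftrightarrow>
     (\<exists>A c. finite A \<and> (\<forall>\<alpha>\<in>A. sum \<alpha> UNIV \<le> t) \<and>
            f = (\<lambda>x. \<Sum>\<alpha>\<in>A. c \<alpha> * monomial_fun \<alpha> x))"

text \<open>Average of f over the sphere of radius r centred at 0, w.r.t. the normalized
  rotation-invariant surface measure, realised as the cone measure:
  sigma(A) = vol{t x. x in A, 0 <= t <= 1} / vol(unit ball).\<close>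
definition sphere_avg :: "(real^'n::finite \<Rightarrow> real) \<Rightarrow> real \<Rightarrow> real" where
  "sphere_avg f r =
     integral (ball 0 1) (\<lambda>x. f (r *\<^sub>R (x /\<^sub>R norm x))) / measure lebesgue (ball (0::real^'n) 1)"

definition euclidean_design :: "nat \<Rightarrow> (real^'n::finite) set \<Rightarrow> (real^'n \<Rightarrow> real) \<Rightarrow> bool" where
  "euclidean_design t X w \<longleftrightarrow>
     finite X \<and> 0 \<notin> X \<and> (\<forall>x\<in>X. w x > 0) \<and>
     (\<forall>f. poly_fun_deg_le t f \<longrightarrow>
        (\<Sum>\<rho>\<in>norm ` X. (\<Sum>x\<in>{x\<in>X. norm x = \<rho>}. w x) * sphere_avg f \<rho>)
        = (\<Sum>x\<in>X. w x * f x))"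

definition I_set :: "nat \<Rightarrow> (real^'n::finite) set" where
  "I_set k = {x. (\<forall>i. x $ i \<in> {-1, 0, 1}) \<and> card {i. x $ i \<noteq> 0} = k}"

definition shell :: "(nat \<Rightarrow> real) \<Rightarrow> nat \<Rightarrow> (real^'n::finite) set" where
  "shell r k = (\<lambda>v. (r k / sqrt (real k)) *\<^sub>R v) ` I_set k"

definition X_J :: "nat set \<Rightarrow> (nat \<Rightarrow> real) \<Rightarrow> (real^'n::finite) set" where
  "X_J J r = (\<Union>k\<in>J. shell r k)"

end

theory Submission
  imports Defs
begin


definition tr :: "'n \<Rightarrow> 'n \<Rightarrow> 'n \<Rightarrow> 'n" where
  "tr i j k = (if k = i then j else if k = j then i else k)"

definition refl_map :: "'n::finite \<Rightarrow> real^'n \<Rightarrow> real^'n" where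
  "refl_map i x = (\<chi> j. if j = i then - (x$j) else x$j)"

definition swap_map :: "'n::finite \<Rightarrow> 'n \<Rightarrow> real^'n \<Rightarrow> real^'n" where
  "swap_map i j x = (\<chi> k. x $ (tr i j k))"

lemma tr_tr[simp]: "tr i j (tr i j k) = k" by (auto simp: tr_def)

lemma refl_refl[simp]: "refl_map i (refl_map i x) = x"
  by (simp add: refl_map_def vec_eq_iff)

lemma swap_swap[simp]: "swap_map i j (swap_map i j x) = x"
  by (simp add: swap_map_def vec_eq_iff)

lemma linear_refl: "linear (refl_map i)"
  by (rule linearI) (auto simp: refl_map_def vec_eq_iff)

lemma linear_swap: "linear (swap_map i j)"
  by (rule linearI) (auto simp: swap_map_def vec_eq_iff)

lemma inj_tr: "inj (tr i j)"
  by (metis injI tr_tr)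

lemma tr_UNIV: "tr i j ` UNIV = UNIV"
  by (metis surj_def tr_tr)

lemma norm_refl: "norm (refl_map i x) = norm x"
  unfolding norm_eq_sqrt_inner inner_vec_def refl_map_def
  by (auto intro!: sum.cong)

lemma norm_swap: "norm (swap_map i j x) = norm x"
proof -
  have "(\<Sum>k\<in>UNIV. x $ tr i j k * x $ tr i j k) = (\<Sum>k\<in>tr i j ` UNIV. x $ k * x $ k)"
    by (subst sum.reindex[OF inj_tr]) auto
  then show ?thesis
    unfolding norm_eq_sqrt_inner inner_vec_def swap_map_def by (simp add: tr_UNIV)
qed

lemma refl_cbox: "refl_map i ` cbox u v = cbox (\<chi> j. if j = i then - (v$j) else u$j) (\<chi> j. if j = i then - (u$j) else v$j)"
proof -
  have "y \<in> refl_map i ` cbox u v" if "y \<in> cbox (\<chi> j. if j = i then - (v$j) else u$j) (\<chi> j. if j = i then - (u$j) else v$j)" for y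
  proof
    show "y = refl_map i (refl_map i y)" by simp
    show "refl_map i y \<in> cbox u v" using that
      by (auto simp: mem_box_cart refl_map_def split: if_splits)
  qed
  moreover have "refl_map i x \<in> cbox (\<chi> j. if j = i then - (v$j) else u$j) (\<chi> j. if j = i then - (u$j) else v$j)"
    if "x \<in> cbox u v" for x
    using that by (auto simp: mem_box_cart refl_map_def)
  ultimately show ?thesis by blast
qed

lemma swap_cbox: "swap_map i j ` cbox u v = cbox (swap_map i j u) (swap_map i j v)"
proof -
  have "y \<in> swap_map i j ` cbox u v" if "y \<in> cbox (swap_map i j u) (swap_map i j v)" for y
  proof
    show "y = swap_map i j (swap_map i j y)" by simp
    show "swap_map i j y \<in> cbox u v" using that
      by (auto simp: mem_box_cart swap_map_def) (metis tr_tr)+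
  qed
  moreover have "swap_map i j x \<in> cbox (swap_map i j u) (swap_map i j v)"
    if "x \<in> cbox u v" for x
    using that by (auto simp: mem_box_cart swap_map_def)
  ultimately show ?thesis by blast
qed

lemma content_refl: "Henstock_Kurzweil_Integration.content (refl_map i ` cbox u v) = Henstock_Kurzweil_Integration.content (cbox u v)"
  unfolding refl_cbox content_cbox_if_cart
  by (auto simp: interval_eq_empty_cart(2) intro!: prod.cong split: if_splits)

lemma content_swap: "Henstock_Kurzweil_Integration.content (swap_map i j ` cbox u v) = Henstock_Kurzweil_Integration.content (cbox u v)"
proof -
  have e: "(cbox (swap_map i j u) (swap_map i j v) = {}) = (cbox u v = {})"
    unfolding interval_eq_empty_cart(2) swap_map_def by (auto) (metis tr_tr)+
  have p: "(\<Prod>k\<in>UNIV. v $ tr i j k - u $ tr i j k) = (\<Prod>k\<in>tr i j ` UNIV. v $ k - u $ k)"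
    by (subst prod.reindex[OF inj_tr]) auto
  show ?thesis
    unfolding swap_cbox content_cbox_if_cart e using p by (simp add: swap_map_def tr_UNIV)
qed




definition good_map :: "(real^'n::finite \<Rightarrow> real^'n) \<Rightarrow> bool" where
  "good_map g \<longleftrightarrow> (\<forall>x. g (g x) = x) \<and> linear g \<and> (\<forall>x. norm (g x) = norm x) \<and>
     (\<forall>u v. \<exists>a b. g ` cbox u v = cbox a b) \<and>
     (\<forall>u v. Henstock_Kurzweil_Integration.content (g ` cbox u v) = Henstock_Kurzweil_Integration.content (cbox u v))"

lemma good_refl: "good_map (refl_map i)"
  unfolding good_map_def using linear_refl norm_refl content_refl by (auto simp: refl_cbox)

lemma good_swap: "good_map (swap_map i j)"
  unfolding good_map_def using linear_swap norm_swap content_swap by (auto simp: swap_cbox)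

lemma ball_sub_cbox: "ball (0::real^'n::finite) 1 \<subseteq> cbox (-1) 1"
proof
  fix x :: "real^'n" assume "x \<in> ball 0 1"
  then have "norm x < 1" by simp
  then have "\<bar>x $ i\<bar> < 1" for i using component_le_norm_cart[of x i] by linarith
  then show "x \<in> cbox (-1) 1" by (auto simp: mem_box_cart abs_less_iff less_imp_le)
qed

lemma good_has_integral:
  fixes g :: "real^'n::finite \<Rightarrow> real^'n" and h :: "real^'n \<Rightarrow> real"
  assumes g: "good_map g" and hi: "(h has_integral I) (ball 0 1)"
  shows "((\<lambda>x. h (g x)) has_integral I) (ball 0 1)"
proof -
  have gg: "\<And>x. g (g x) = x" and lin: "linear g" and ng: "\<And>x. norm (g x) = norm x"
    and gc: "\<And>u v. \<exists>a b. g ` cbox u v = cbox a b"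
    and cc: "\<And>u v. Henstock_Kurzweil_Integration.content (g ` cbox u v) = Henstock_Kurzweil_Integration.content (cbox u v)"
    using g unfolding good_map_def by blast+
  define F where "F x = (if x \<in> ball 0 1 then h x else 0)" for x
  have "(F has_integral I) (cbox (-1) 1)"
    unfolding F_def using hi ball_sub_cbox by (subst has_integral_restrict) auto
  then have "((\<lambda>x. F (g x)) has_integral (1 / 1) *\<^sub>R I) (g ` cbox (-1) 1)"
    by (intro has_integral_twiddle[where h=g and g=g and r=1])
       (auto simp: gg gc cc linear_continuous_at lin linear_conv_bounded_linear[symmetric])
  moreover have "F (g x) = (if x \<in> ball 0 1 then h (g x) else 0)" for x
    by (simp add: F_def ng)
  moreover have sub: "ball 0 1 \<subseteq> g ` cbox (-1) 1"
  proof
    fix x :: "real^'n" assume "x \<in> ball 0 1"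
    then have "g x \<in> cbox (-1) 1" using ball_sub_cbox ng by auto
    then show "x \<in> g ` cbox (-1) 1" by (metis gg image_eqI)
  qed
  ultimately have "((\<lambda>x. if x \<in> ball 0 1 then h (g x) else 0) has_integral I) (g ` cbox (-1) 1)"
    by simp
  then show ?thesis using has_integral_restrict[OF sub] by blast
qed

lemma good_integral:
  fixes g :: "real^'n::finite \<Rightarrow> real^'n" and h :: "real^'n \<Rightarrow> real"
  assumes g: "good_map g"
  shows "integral (ball 0 1) (\<lambda>x. h (g x)) = integral (ball 0 1) h"
proof (cases "h integrable_on ball 0 1")
  case True
  then show ?thesis using good_has_integral[OF g] by (meson has_integral_integrable_integral integral_unique)
next
  case False
  have gg: "\<And>x. g (g x) = x" using g unfolding good_map_def by blast
  have "\<not> (\<lambda>x. h (g x)) integrable_on ball 0 1"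
  proof
    assume "(\<lambda>x. h (g x)) integrable_on ball 0 1"
    then have "(\<lambda>x. h (g (g x))) integrable_on ball 0 1"
      using good_has_integral[OF g] unfolding integrable_on_def by blast
    then show False using False by (simp add: gg)
  qed
  then show ?thesis using False by (simp add: not_integrable_integral)
qed

lemma good_sphere_avg:
  assumes g: "good_map g"
  shows "sphere_avg (\<lambda>x. f (g x)) \<rho> = sphere_avg f \<rho>"
proof -
  have lin: "linear g" and ng: "\<And>x. norm (g x) = norm x" using g unfolding good_map_def by blast+
  have "g (\<rho> *\<^sub>R (x /\<^sub>R norm x)) = \<rho> *\<^sub>R (g x /\<^sub>R norm (g x))" for x
    by (simp add: ng linear_scale[OF lin])
  then show ?thesis
    unfolding sphere_avg_def
    using good_integral[OF g, of "\<lambda>y. f (\<rho> *\<^sub>R (y /\<^sub>R norm y))"] by simp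
qed

lemma sa_integrable:
  fixes f :: "real^'n::finite \<Rightarrow> real"
  assumes f: "continuous_on UNIV f"
  shows "(\<lambda>x. f (\<rho> *\<^sub>R (x /\<^sub>R norm x))) integrable_on ball 0 1"
proof -
  let ?S = "ball (0::real^'n) 1 - {0}"
  let ?G = "\<lambda>x. f (\<rho> *\<^sub>R (x /\<^sub>R norm x))"
  have cS: "continuous_on ?S ?G"
    by (intro continuous_on_compose2[OF f] continuous_intros) auto
  have Sl: "?S \<in> sets lebesgue"
    by (simp add: borel_open open_Diff sets_completionI_sets)
  have "compact (f ` cball 0 \<bar>\<rho>\<bar>)"
    by (rule compact_continuous_image) (auto intro: continuous_on_subset[OF f])
  then obtain M where M: "\<And>y. y \<in> f ` cball 0 \<bar>\<rho>\<bar> \<Longrightarrow> norm y \<le> M"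
    using compact_imp_bounded bounded_iff by metis
  have bnd: "norm (?G x) \<le> M" for x
  proof -
    have "norm (x /\<^sub>R norm x) \<le> 1"
      by (simp add: sgn_div_norm[symmetric] norm_sgn)
    then have "norm (\<rho> *\<^sub>R (x /\<^sub>R norm x)) \<le> \<bar>\<rho>\<bar>"
      by (metis mult.right_neutral mult_left_mono abs_ge_zero norm_scaleR)
    then show ?thesis by (intro M) auto
  qed
  have meas: "?G \<in> borel_measurable (lebesgue_on ?S)"
    by (rule continuous_imp_measurable_on_sets_lebesgue[OF cS Sl])
  have ci: "(\<lambda>_. M) integrable_on ?S"
    by (intro integrable_on_const bounded_set_imp_lmeasurable) (auto simp: Sl intro: bounded_subset[of "ball 0 1"])
  have "?G absolutely_integrable_on ?S"
    by (rule measurable_bounded_by_integrable_imp_absolutely_integrable[OF meas Sl ci bnd])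
  then have "?G integrable_on ?S" using set_lebesgue_integral_eq_integral(1) by blast
  then show ?thesis
    by (rule integrable_spike_set) (auto intro: negligible_subset[of "{0}"])
qed




lemma vol_pos: "measure lebesgue (ball (0::real^'n::finite) 1) > 0"
proof -
  have "measure lebesgue (ball (0::real^'n) 1) = measure lborel (ball (0::real^'n) 1)"
    by (simp add: measure_completion)
  then show ?thesis using content_ball_pos[of 1 "0::real^'n"] by simp
qed

lemma cont_mono: "continuous_on UNIV (monomial_fun \<alpha> :: real^'n::finite \<Rightarrow> real)"
  unfolding monomial_fun_def[abs_def] by (intro continuous_intros)

lemma sa_sum:
  fixes g :: "'a \<Rightarrow> real^'n::finite \<Rightarrow> real"
  assumes "finite A" "\<And>a. a \<in> A \<Longrightarrow> continuous_on UNIV (g a)"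
  shows "sphere_avg (\<lambda>x. \<Sum>a\<in>A. c a * g a x) \<rho> = (\<Sum>a\<in>A. c a * sphere_avg (g a) \<rho>)"
proof -
  have "integral (ball 0 1) (\<lambda>x. \<Sum>a\<in>A. c a * g a (\<rho> *\<^sub>R (x /\<^sub>R norm x)))
      = (\<Sum>a\<in>A. integral (ball 0 1) (\<lambda>x. c a * g a (\<rho> *\<^sub>R (x /\<^sub>R norm x))))"
  proof (rule integral_sum[OF assms(1)])
    fix a assume "a \<in> A"
    then show "(\<lambda>x. c a * g a (\<rho> *\<^sub>R (x /\<^sub>R norm x))) integrable_on ball 0 1"
      by (intro integrable_on_mult_right sa_integrable assms(2))
  qed
  then show ?thesis
    unfolding sphere_avg_def by (simp add: sum_divide_distrib)
qed

lemma sa_neg: "sphere_avg (\<lambda>x. - f x) \<rho> = - sphere_avg f \<rho>"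
  unfolding sphere_avg_def by (simp add: integral_neg)

lemma sa_one: "sphere_avg (\<lambda>x::real^'n::finite. 1) \<rho> = 1"
proof -
  have "integral (ball (0::real^'n) 1) (\<lambda>x. 1) = measure lebesgue (ball (0::real^'n) 1)"
    by (rule lmeasure_integral[symmetric]) (auto intro: bounded_set_imp_lmeasurable)
  then show ?thesis unfolding sphere_avg_def using vol_pos[where 'n='n] by simp
qed

lemma norm_sph: "x \<noteq> 0 \<Longrightarrow> norm (\<rho> *\<^sub>R (x /\<^sub>R norm x)) = \<bar>\<rho>\<bar>"
  by (simp add: abs_mult)

lemma sa_normsq: "sphere_avg (\<lambda>x::real^'n::finite. norm x ^ 2) \<rho> = \<rho>^2"
proof -
  have "integral (ball (0::real^'n) 1) (\<lambda>x. norm (\<rho> *\<^sub>R (x /\<^sub>R norm x)) ^ 2)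
      = integral (ball (0::real^'n) 1) (\<lambda>x. \<rho>^2 * 1)"
  proof (rule integral_spike[of "{0}"])
    fix x :: "real^'n" assume "x \<in> ball 0 1 - {0}"
    then have "x \<noteq> 0" by auto
    then show "\<rho>^2 * 1 = norm (\<rho> *\<^sub>R (x /\<^sub>R norm x)) ^ 2"
      using norm_sph[OF \<open>x \<noteq> 0\<close>, of \<rho>] by simp
  qed auto
  also have "\<dots> = \<rho>^2 * measure lebesgue (ball (0::real^'n) 1)"
    by (subst integral_mult_right, subst lmeasure_integral) (auto intro: bounded_set_imp_lmeasurable)
  finally show ?thesis unfolding sphere_avg_def using vol_pos[where 'n='n] by simp
qed

definition Lf :: "(real^'n::finite) set \<Rightarrow> (real^'n \<Rightarrow> real) \<Rightarrow> (real^'n \<Rightarrow> real) \<Rightarrow> real" where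
  "Lf X w f = (\<Sum>x\<in>X. w x * (sphere_avg f (norm x) - f x))"

lemma design_eq_iff:
  assumes "finite X"
  shows "((\<Sum>\<rho>\<in>norm ` X. (\<Sum>x\<in>{x\<in>X. norm x = \<rho>}. w x) * sphere_avg f \<rho>) = (\<Sum>x\<in>X. w x * f x))
     \<longleftrightarrow> Lf X w f = 0"
proof -
  have "(\<Sum>\<rho>\<in>norm ` X. (\<Sum>x\<in>{x\<in>X. norm x = \<rho>}. w x) * sphere_avg f \<rho>)
      = (\<Sum>\<rho>\<in>norm ` X. (\<Sum>x\<in>{x\<in>X. norm x = \<rho>}. w x * sphere_avg f (norm x)))"
    by (intro sum.cong refl) (auto simp: sum_distrib_right)
  also have "\<dots> = (\<Sum>x\<in>X. w x * sphere_avg f (norm x))"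
    by (rule sum.image_gen[symmetric]) (rule assms)
  finally show ?thesis
    unfolding Lf_def by (simp add: right_diff_distrib sum_subtractf)
qed

lemma Lf_sum:
  fixes g :: "'a \<Rightarrow> real^'n::finite \<Rightarrow> real"
  assumes "finite A" "\<And>a. a \<in> A \<Longrightarrow> continuous_on UNIV (g a)"
  shows "Lf X w (\<lambda>x. \<Sum>a\<in>A. c a * g a x) = (\<Sum>a\<in>A. c a * Lf X w (g a))"
proof -
  have p: "w x * (sphere_avg (\<lambda>x. \<Sum>a\<in>A. c a * g a x) (norm x) - (\<Sum>a\<in>A. c a * g a x))
     = (\<Sum>a\<in>A. c a * (w x * (sphere_avg (g a) (norm x) - g a x)))" for x
  proof -
    have "sphere_avg (\<lambda>x. \<Sum>a\<in>A. c a * g a x) (norm x) = (\<Sum>a\<in>A. c a * sphere_avg (g a) (norm x))"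
      by (rule sa_sum[OF assms])
    then show ?thesis
      by (simp add: sum_subtractf[symmetric] sum_distrib_left right_diff_distrib mult.left_commute)
  qed
  have "Lf X w (\<lambda>x. \<Sum>a\<in>A. c a * g a x) = (\<Sum>x\<in>X. \<Sum>a\<in>A. c a * (w x * (sphere_avg (g a) (norm x) - g a x)))"
    unfolding Lf_def using p by simp
  also have "\<dots> = (\<Sum>a\<in>A. c a * Lf X w (g a))"
    by (subst sum.swap) (simp add: Lf_def sum_distrib_left)
  finally show ?thesis .
qed

lemma Lf_neg: "Lf X w (\<lambda>x. - f x) = - Lf X w f"
proof -
  have "w x * (- sphere_avg f (norm x) - - f x) = - (w x * (sphere_avg f (norm x) - f x))" for x
    by (simp add: algebra_simps)
  then show ?thesis unfolding Lf_def sa_neg by (simp only: sum_negf)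
qed

lemma Lf_inv:
  assumes g: "good_map g" and X: "g ` X \<subseteq> X" and wg: "\<And>x. x \<in> X \<Longrightarrow> w (g x) = w x"
  shows "Lf X w (\<lambda>x. f (g x)) = Lf X w f"
proof -
  have gg: "\<And>x. g (g x) = x" using g unfolding good_map_def by blast
  have inj: "inj_on g X" by (rule inj_onI) (metis gg)
  have gX: "g ` X = X"
  proof
    show "X \<subseteq> g ` X"
    proof
      fix x assume "x \<in> X" then have "g x \<in> X" using X by blast
      then show "x \<in> g ` X" by (metis gg image_eqI)
    qed
  qed (rule X)
  have "(\<Sum>x\<in>X. w x * f (g x)) = (\<Sum>x\<in>X. w (g x) * f (g x))"
    by (intro sum.cong refl) (simp add: wg)
  also have "\<dots> = (\<Sum>y\<in>g ` X. w y * f y)"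
    by (subst sum.reindex[OF inj]) simp
  finally have e: "(\<Sum>x\<in>X. w x * f (g x)) = (\<Sum>x\<in>X. w x * f x)" by (simp add: gX)
  have "Lf X w (\<lambda>x. f (g x)) = (\<Sum>x\<in>X. w x * sphere_avg f (norm x)) - (\<Sum>x\<in>X. w x * f (g x))"
    unfolding Lf_def good_sphere_avg[OF g, of f] by (simp only: right_diff_distrib sum_subtractf)
  also have "\<dots> = Lf X w f"
    unfolding e Lf_def by (simp only: right_diff_distrib sum_subtractf)
  finally show ?thesis .
qed

lemma mono_refl: "monomial_fun \<alpha> (refl_map i x) = (-1)^(\<alpha> i) * monomial_fun \<alpha> x"
proof -
  have "\<And>j. (refl_map i x $ j)^(\<alpha> j) = (if j = i then (-1)^(\<alpha> j) else 1) * (x$j)^(\<alpha> j)"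
    by (simp add: refl_map_def power_minus[of "x$j" for j])
  then have "monomial_fun \<alpha> (refl_map i x) = (\<Prod>j\<in>UNIV. (if j = i then (-1)^(\<alpha> j) else 1) * (x$j)^(\<alpha> j))"
    unfolding monomial_fun_def by (simp only:)
  also have "\<dots> = (\<Prod>j\<in>UNIV. (if j = i then (-1)^(\<alpha> j) else 1)) * monomial_fun \<alpha> x"
    unfolding prod.distrib monomial_fun_def by (simp only:)
  also have "(\<Prod>j\<in>UNIV. (if j = i then (-1)^(\<alpha> j) else (1::real))) = (-1)^(\<alpha> i)"
    by (subst prod.delta) auto
  finally show ?thesis .
qed

lemma mono_single: "monomial_fun (\<lambda>j. if j = i then p else 0) x = (x$i)^p"
proof -
  have "monomial_fun (\<lambda>j. if j = i then p else 0) x = (\<Prod>j\<in>UNIV. if j = i then (x$j)^p else 1)"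
    unfolding monomial_fun_def by (intro prod.cong refl) simp
  also have "\<dots> = (x$i)^p" by (subst prod.delta) auto
  finally show ?thesis .
qed



lemma Lf_zero_if_even_odd:
  fixes X :: "(real^'n::finite) set"
  assumes rX: "\<And>i. refl_map i ` X \<subseteq> X" and rw: "\<And>i x. x \<in> X \<Longrightarrow> w (refl_map i x) = w x"
    and sX: "\<And>i j. swap_map i j ` X \<subseteq> X" and sw: "\<And>i j x. x \<in> X \<Longrightarrow> w (swap_map i j x) = w x"
    and deg: "sum \<alpha> UNIV \<le> 3"
  shows "Lf X w (monomial_fun \<alpha>) = 0"
proof (cases "\<exists>i. odd (\<alpha> i)")
  case True
  then obtain i where i: "odd (\<alpha> i)" by blast
  have "Lf X w (monomial_fun \<alpha>) = Lf X w (\<lambda>x. monomial_fun \<alpha> (refl_map i x))"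
    using Lf_inv[where g="refl_map i" and X=X and w=w and f="monomial_fun \<alpha>", OF good_refl rX rw] by simp
  also have "\<dots> = Lf X w (\<lambda>x. - monomial_fun \<alpha> x)"
    using i by (simp add: mono_refl)
  also have "\<dots> = - Lf X w (monomial_fun \<alpha>)"
    by (simp add: Lf_neg)
  finally show ?thesis by simp
next
  case False
  then have ev: "\<And>i. even (\<alpha> i)" by blast
  have "even (sum \<alpha> UNIV)" by (rule dvd_sum) (use ev in auto)
  moreover have "\<And>s::nat. s \<le> 3 \<Longrightarrow> even s \<Longrightarrow> s = 0 \<or> s = 2" by presburger
  ultimately have "sum \<alpha> UNIV = 0 \<or> sum \<alpha> UNIV = 2" using deg by blast
  then show ?thesis
  proof
    assume "sum \<alpha> UNIV = 0"
    then have "\<alpha> = (\<lambda>_. 0)" by (simp add: fun_eq_iff)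
    then have "monomial_fun \<alpha> = (\<lambda>x. 1)" by (simp add: monomial_fun_def[abs_def])
    then show ?thesis by (simp add: Lf_def sa_one)
  next
    assume s2: "sum \<alpha> UNIV = 2"
    then obtain i where i0: "\<alpha> i \<noteq> 0" by (metis sum.neutral zero_neq_numeral)
    have "\<alpha> i \<le> sum \<alpha> UNIV" by (rule member_le_sum) auto
    moreover have "\<And>s::nat. s \<le> 2 \<Longrightarrow> even s \<Longrightarrow> s \<noteq> 0 \<Longrightarrow> s = 2" by presburger
    ultimately have ai: "\<alpha> i = 2" using s2 i0 ev[of i] by simp
    have "sum \<alpha> UNIV = \<alpha> i + sum \<alpha> (UNIV - {i})" by (simp add: sum.remove)
    with s2 ai have "sum \<alpha> (UNIV - {i}) = 0" by simp
    then have "\<forall>j\<in>UNIV - {i}. \<alpha> j = 0" by simp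
    with ai have aeq: "\<alpha> = (\<lambda>j. if j = i then 2 else 0)" by (auto simp: fun_eq_iff)
    have m: "monomial_fun \<alpha> = (\<lambda>x. (x$i)^2)" unfolding aeq by (rule ext, rule mono_single)
    have eqj: "Lf X w (\<lambda>x. (x$j)^2) = Lf X w (\<lambda>x. (x$i)^2)" for j
    proof -
      have "Lf X w (\<lambda>x. ((swap_map i j x)$i)^2) = Lf X w (\<lambda>x. (x$i)^2)"
        by (rule Lf_inv[where g="swap_map i j" and X=X and w=w, OF good_swap sX sw])
      then show ?thesis by (simp add: swap_map_def tr_def)
    qed
    have cj: "continuous_on UNIV (\<lambda>x::real^'n. (x$j)^2)" for j
      by (intro continuous_intros)
    have "(\<Sum>j\<in>UNIV. 1 * Lf X w (\<lambda>x. (x$j)^2)) = Lf X w (\<lambda>x. \<Sum>j\<in>UNIV. 1 * (x$j)^2)"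
      by (rule Lf_sum[symmetric]) (auto intro: cj)
    also have "(\<lambda>x::real^'n. \<Sum>j\<in>UNIV. 1 * (x$j)^2) = (\<lambda>x. norm x ^ 2)"
    proof (rule ext)
      fix x :: "real^'n"
      have "norm x ^ 2 = (\<Sum>j\<in>UNIV. x$j * x$j)"
        by (simp only: power2_norm_eq_inner inner_vec_def inner_real_def)
      then show "(\<Sum>j\<in>UNIV. 1 * (x$j)^2) = norm x ^ 2"
        by (simp only: power2_eq_square mult_1_left)
    qed
    also have "Lf X w (\<lambda>x. norm x ^ 2) = 0"
      by (simp add: Lf_def sa_normsq)
    finally have z: "(\<Sum>j\<in>UNIV. 1 * Lf X w (\<lambda>x. (x$j)^2)) = 0" .
    have "(\<Sum>j\<in>UNIV. 1 * Lf X w (\<lambda>x. (x$j)^2)) = (\<Sum>j\<in>(UNIV::'n set). Lf X w (\<lambda>x. (x$i)^2))"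
      by (rule sum.cong[OF refl]) (simp only: mult_1_left, rule eqj)
    with z have "real CARD('n) * Lf X w (\<lambda>x. (x$i)^2) = 0" by simp
    then show ?thesis by (simp add: m)
  qed
qed

lemma Lf_poly3:
  fixes X :: "(real^'n::finite) set"
  assumes rX: "\<And>i. refl_map i ` X \<subseteq> X" and rw: "\<And>i x. x \<in> X \<Longrightarrow> w (refl_map i x) = w x"
    and sX: "\<And>i j. swap_map i j ` X \<subseteq> X" and sw: "\<And>i j x. x \<in> X \<Longrightarrow> w (swap_map i j x) = w x"
    and f: "poly_fun_deg_le 3 f"
  shows "Lf X w f = 0"
proof -
  obtain A c where A: "finite A" "\<forall>\<alpha>\<in>A. sum \<alpha> UNIV \<le> 3"
    and fe: "f = (\<lambda>x. \<Sum>\<alpha>\<in>A. c \<alpha> * monomial_fun \<alpha> x)"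
    using f unfolding poly_fun_deg_le_def by blast
  have "Lf X w f = (\<Sum>\<alpha>\<in>A. c \<alpha> * Lf X w (monomial_fun \<alpha>))"
    unfolding fe by (rule Lf_sum[OF A(1)]) (rule cont_mono)
  also have "\<dots> = 0"
    using A(2) by (simp add: Lf_zero_if_even_odd[OF rX rw sX sw])
  finally show ?thesis .
qed




definition g9 :: "'n \<Rightarrow> 'n \<Rightarrow> real^'n::finite \<Rightarrow> real" where
  "g9 a b x = (x$a * x$b * ((x$a)^2 - (x$b)^2))^2"

lemma cont_g9: "continuous_on UNIV (g9 a b)"
  unfolding g9_def[abs_def] by (intro continuous_intros)

lemma sa_g9_pos:
  fixes a b :: "'n::finite"
  assumes ab: "a \<noteq> b" and rho: "\<rho> \<noteq> 0"
  shows "sphere_avg (g9 a b) \<rho> > 0"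
proof -
  define G where "G y = g9 a b (\<rho> *\<^sub>R (y /\<^sub>R norm y))" for y :: "real^'n"
  define p :: "real^'n" where "p = (\<chi> j. if j = a then 1/2 else if j = b then 1/4 else 0)"
  have pa: "p$a = 1/2" and pb: "p$b = 1/4" using ab by (auto simp: p_def)
  have "norm p \<le> (\<Sum>j\<in>UNIV. \<bar>p$j\<bar>)" by (rule norm_le_l1_cart)
  also have "(\<Sum>j\<in>UNIV. \<bar>p$j\<bar>) = (\<Sum>j\<in>UNIV. (if j = a then 1/2 else 0) + (if j = b then 1/4 else 0))"
    using ab by (intro sum.cong refl) (auto simp: p_def)
  also have "\<dots> = 3/4" by (simp add: sum.distrib)
  finally have np: "norm p < 1" by simp
  have p0: "p \<noteq> 0" proof assume "p = 0" then show False using pa by simp qed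
  then have npos: "norm p > 0" by simp
  define t where "t = \<rho> / norm p"
  have t0: "t \<noteq> 0" using rho npos by (simp add: t_def)
  have "G p = g9 a b (t *\<^sub>R p)" by (simp add: G_def t_def divide_inverse)
  also have "\<dots> = (t * t * (t * t) * (1/8) * (3/16))^2"
    by (simp add: g9_def pa pb power2_eq_square algebra_simps)
  finally have Gp: "G p > 0" using t0 by simp
  have contG: "continuous_on (- {0}) G"
    unfolding G_def by (intro continuous_on_compose2[OF cont_g9] continuous_intros) auto
  have "isCont G p"
    using contG p0 by (simp add: continuous_on_eq_continuous_at open_Compl)
  then obtain d where d: "d > 0" "\<And>y. dist y p < d \<Longrightarrow> dist (G y) (G p) < G p / 2"
    using Gp continuous_at_eps_delta[THEN iffD1, of p G] by (meson half_gt_zero)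
  define S where "S = ball p (min d (norm p)) \<inter> ball 0 1"
  have "open S" "p \<in> S" using d npos np by (auto simp: S_def)
  then obtain u v where uv: "cbox u v \<subseteq> S" "\<forall>i\<in>Basis. u \<bullet> i < v \<bullet> i"
    by (rule open_contains_cbox)
  have S0: "0 \<notin> S" by (auto simp: S_def dist_norm)
  have Sb: "S \<subseteq> ball 0 1" by (auto simp: S_def)
  have GS: "G y \<ge> G p / 2" if "y \<in> S" for y
  proof -
    have "dist y p < d" using that by (auto simp: S_def dist_commute)
    then have "dist (G y) (G p) < G p / 2" by (rule d(2))
    then show ?thesis unfolding dist_real_def by linarith
  qed
  have Gnn: "G y \<ge> 0" for y by (simp add: G_def g9_def)
  have intball: "G integrable_on ball 0 1" unfolding G_def by (rule sa_integrable[OF cont_g9])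
  have intbox: "G integrable_on cbox u v"
    by (rule integrable_continuous) (rule continuous_on_subset[OF contG], use uv S0 in auto)
  have cpos: "Henstock_Kurzweil_Integration.content (cbox u v) > 0" using uv(2) by (rule content_pos_lt)
  have "0 < Henstock_Kurzweil_Integration.content (cbox u v) * (G p / 2)" using cpos Gp by simp
  also have "\<dots> = integral (cbox u v) (\<lambda>_. G p / 2)" by simp
  also have "\<dots> \<le> integral (cbox u v) G"
    by (rule integral_le) (use intbox GS uv(1) in auto)
  also have "\<dots> \<le> integral (ball 0 1) G"
    by (rule integral_subset_le) (use uv(1) Sb intbox intball Gnn in auto)
  finally have "integral (ball 0 1) G > 0" .
  then show ?thesis unfolding sphere_avg_def G_def[abs_def] using vol_pos[where 'n='n] by simp
qed




lemma finite_vecs: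
  assumes "finite S"
  shows "finite {x::real^'n::finite. \<forall>i. x$i \<in> S}"
proof -
  have "{x::real^'n. \<forall>i. x$i \<in> S} \<subseteq> vec_lambda ` (PiE UNIV (\<lambda>_. S))"
  proof
    fix x :: "real^'n" assume "x \<in> {x. \<forall>i. x$i \<in> S}"
    then have "(\<lambda>i. x$i) \<in> PiE UNIV (\<lambda>_. S)" by auto
    moreover have "x = vec_lambda (\<lambda>i. x$i)" by simp
    ultimately show "x \<in> vec_lambda ` (PiE UNIV (\<lambda>_. S))" by blast
  qed
  moreover have "finite (vec_lambda ` (PiE UNIV (\<lambda>_. S)) :: (real^'n) set)"
    using assms by (intro finite_imageI finite_PiE) auto
  ultimately show ?thesis by (rule finite_subset)
qed

lemma finite_I: "finite (I_set k :: (real^'n::finite) set)"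
proof -
  have "I_set k \<subseteq> {x::real^'n. \<forall>i. x$i \<in> {-1,0,1}}" by (auto simp: I_set_def)
  then show ?thesis using finite_vecs[of "{-1,0,1::real}"] finite_subset by auto
qed

lemma I_refl: "v \<in> I_set k \<Longrightarrow> refl_map i v \<in> I_set k"
proof -
  assume v: "v \<in> I_set k"
  have "{j. refl_map i v $ j \<noteq> 0} = {j. v $ j \<noteq> 0}" by (auto simp: refl_map_def)
  with v show ?thesis by (auto simp: I_set_def refl_map_def)
qed

lemma I_swap: "v \<in> I_set k \<Longrightarrow> swap_map i j v \<in> I_set k"
proof -
  assume v: "v \<in> I_set k"
  have e: "{k. swap_map i j v $ k \<noteq> 0} = tr i j ` {k. v $ k \<noteq> 0}"
  proof
    show "{k. swap_map i j v $ k \<noteq> 0} \<subseteq> tr i j ` {k. v $ k \<noteq> 0}"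
    proof
      fix y assume "y \<in> {k. swap_map i j v $ k \<noteq> 0}"
      then have "v $ tr i j y \<noteq> 0" by (simp add: swap_map_def)
      then show "y \<in> tr i j ` {k. v $ k \<noteq> 0}" by (metis (mono_tags) image_eqI mem_Collect_eq tr_tr)
    qed
  qed (auto simp: swap_map_def)
  have "card {k. swap_map i j v $ k \<noteq> 0} = card {k. v $ k \<noteq> 0}"
    unfolding e by (rule card_image) (meson inj_tr inj_on_subset subset_UNIV)
  with v show ?thesis by (auto simp: I_set_def swap_map_def)
qed

lemma shell_refl: "x \<in> shell r k \<Longrightarrow> refl_map i x \<in> shell r k"
  unfolding shell_def using I_refl linear_scale[OF linear_refl] by blast

lemma shell_swap: "x \<in> shell r k \<Longrightarrow> swap_map i j x \<in> shell r k"
  unfolding shell_def using I_swap linear_scale[OF linear_swap] by blast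

lemma g9_shell:
  assumes "x \<in> shell r k"
  shows "g9 a b x = 0"
proof -
  obtain v where v: "v \<in> I_set k" and x: "x = (r k / sqrt (real k)) *\<^sub>R v"
    using assms unfolding shell_def by blast
  have va: "v$a \<in> {-1,0,1}" and vb: "v$b \<in> {-1,0,1}" using v by (auto simp: I_set_def)
  show ?thesis using va vb unfolding x g9_def by (auto simp: power2_eq_square)
qed



definition alpha2 :: "'n \<Rightarrow> 'n \<Rightarrow> nat \<Rightarrow> nat \<Rightarrow> 'n \<Rightarrow> nat" where
  "alpha2 a b p q = (\<lambda>j. if j = a then p else if j = b then q else 0)"

lemma mono2:
  fixes a b :: "'n::finite"
  assumes ab: "a \<noteq> b"
  shows "monomial_fun (alpha2 a b p q) x = (x$a)^p * (x$b)^q"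
proof -
  have "monomial_fun (alpha2 a b p q) x = (\<Prod>j\<in>UNIV. (if j = a then (x$a)^p else 1) * (if j = b then (x$b)^q else 1))"
    unfolding monomial_fun_def alpha2_def using ab by (intro prod.cong refl) auto
  also have "\<dots> = (x$a)^p * (x$b)^q" by (simp add: prod.distrib)
  finally show ?thesis .
qed

lemma sum_alpha2:
  fixes a b :: "'n::finite"
  assumes ab: "a \<noteq> b"
  shows "sum (alpha2 a b p q) UNIV = p + q"
proof -
  have "sum (alpha2 a b p q) UNIV = (\<Sum>j\<in>UNIV. (if j = a then p else 0) + (if j = b then q else 0))"
    unfolding alpha2_def using ab by (intro sum.cong refl) auto
  also have "\<dots> = p + q" by (simp add: sum.distrib)
  finally show ?thesis .
qed

lemma poly_g9:
  fixes a b :: "'n::finite"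
  assumes ab: "a \<noteq> b"
  shows "poly_fun_deg_le 9 (g9 a b)"
proof -
  let ?A = "{alpha2 a b 6 2, alpha2 a b 4 4, alpha2 a b 2 6}"
  define c where "c \<beta> = (if \<beta> = alpha2 a b 4 4 then -2 else (1::real))" for \<beta>
  have ev: "alpha2 a b p q a = p" for p q by (simp add: alpha2_def)
  have dd: "alpha2 a b p q = alpha2 a b p' q' \<Longrightarrow> p = p'" for p q p' q' by (metis ev)
  have d1: "alpha2 a b 6 2 \<noteq> alpha2 a b 4 4" using dd[of 6 2 4 4] by auto
  have d2: "alpha2 a b 6 2 \<noteq> alpha2 a b 2 6" using dd[of 6 2 2 6] by auto
  have d3: "alpha2 a b 4 4 \<noteq> alpha2 a b 2 6" using dd[of 4 4 2 6] by auto
  have id: "(u * v * (u^2 - v^2))^2 = 1 * (u^6 * v^2) + ((-2) * (u^4 * v^4) + 1 * (u^2 * v^6))" for u v :: real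
    by algebra
  have "(\<Sum>\<beta>\<in>?A. c \<beta> * monomial_fun \<beta> x) = c (alpha2 a b 6 2) * monomial_fun (alpha2 a b 6 2) x
     + (c (alpha2 a b 4 4) * monomial_fun (alpha2 a b 4 4) x + c (alpha2 a b 2 6) * monomial_fun (alpha2 a b 2 6) x)" for x
    using d1 d2 d3 by (simp add: sum.insert)
  then have "g9 a b x = (\<Sum>\<beta>\<in>?A. c \<beta> * monomial_fun \<beta> x)" for x
    using d1 d2 d3 unfolding g9_def id by (simp add: c_def mono2[OF ab])
  moreover have "\<forall>\<beta>\<in>?A. sum \<beta> UNIV \<le> 9" by (simp add: sum_alpha2[OF ab])
  ultimately show ?thesis unfolding poly_fun_deg_le_def
    by (intro exI[of _ ?A] exI[of _ c]) (auto simp: fun_eq_iff)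
qed




theorem proposition3p1:
  fixes J :: "nat set" and r :: "nat \<Rightarrow> real" and wk :: "nat \<Rightarrow> real"
    and w :: "real^'n::finite \<Rightarrow> real"
  assumes "CARD('n) \<ge> 3"
    and "J \<noteq> {}" and "J \<subseteq> {1..CARD('n)}"
    and "\<forall>k\<in>J. r k > 0"
    and "\<forall>k\<in>J. wk k > 0"
    and "\<forall>k\<in>J. \<forall>x\<in>shell r k. w x = wk k"
  shows "euclidean_design 3 (X_J J r) w \<and> \<not> euclidean_design 9 (X_J J r) w"
proof -
  note card = assms(1) and Jne = assms(2) and Jsub = assms(3) and rpos = assms(4)
    and wkpos = assms(5) and wsh = assms(6)
  let ?X = "X_J J r :: (real^'n) set"
  have finJ: "finite J" using Jsub finite_subset by blast
  have fin: "finite ?X"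
    unfolding X_J_def shell_def using finJ by (auto intro: finite_I)
  have memX: "x \<in> ?X \<longleftrightarrow> (\<exists>k\<in>J. x \<in> shell r k)" for x by (simp add: X_J_def)
  have rX: "refl_map i ` ?X \<subseteq> ?X" for i
  proof
    fix y assume "y \<in> refl_map i ` ?X"
    then obtain x where x: "x \<in> ?X" "y = refl_map i x" by blast
    then obtain k where k: "k \<in> J" "x \<in> shell r k" using memX by blast
    then have "y \<in> shell r k" using x shell_refl by simp
    then show "y \<in> ?X" using k memX by blast
  qed
  have sX: "swap_map i j ` ?X \<subseteq> ?X" for i j
  proof
    fix y assume "y \<in> swap_map i j ` ?X"
    then obtain x where x: "x \<in> ?X" "y = swap_map i j x" by blast
    then obtain k where k: "k \<in> J" "x \<in> shell r k" using memX by blast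
    then have "y \<in> shell r k" using x shell_swap by simp
    then show "y \<in> ?X" using k memX by blast
  qed
  have rw: "w (refl_map i x) = w x" if xX: "x \<in> ?X" for i x
  proof -
    obtain k where k: "k \<in> J" "x \<in> shell r k" using xX memX by blast
    then have "refl_map i x \<in> shell r k" using shell_refl by blast
    then show ?thesis using k wsh by simp
  qed
  have sw: "w (swap_map i j x) = w x" if xX: "x \<in> ?X" for i j x
  proof -
    obtain k where k: "k \<in> J" "x \<in> shell r k" using xX memX by blast
    then have "swap_map i j x \<in> shell r k" using shell_swap by blast
    then show ?thesis using k wsh by simp
  qed
  have wpos: "\<forall>x\<in>?X. w x > 0"
  proof
    fix x assume "x \<in> ?X"
    then obtain k where k: "k \<in> J" "x \<in> shell r k" using memX by blast
    then show "w x > 0" using wsh wkpos by simp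
  qed
  have nz: "x \<noteq> 0" if xX: "x \<in> ?X" for x
  proof -
    obtain k where k: "k \<in> J" "x \<in> shell r k" using xX memX by blast
    then obtain v where v: "v \<in> I_set k" and x: "x = (r k / sqrt (real k)) *\<^sub>R v"
      unfolding shell_def by blast
    have k1: "k \<ge> 1" using k Jsub by auto
    have "card {i. v $ i \<noteq> 0} = k" using v by (simp add: I_set_def)
    then have "{i. v $ i \<noteq> 0} \<noteq> {}" using k1 by (metis card.empty not_one_le_zero)
    then have v0: "v \<noteq> 0" by auto
    have "r k / sqrt (real k) > 0" using rpos k k1 by simp
    then show ?thesis using v0 x by (metis less_irrefl scaleR_eq_0_iff)
  qed
  have Xne: "?X \<noteq> {}"
  proof -
    obtain k where k: "k \<in> J" using Jne by blast
    then have "k \<le> card (UNIV :: 'n set)" using Jsub by auto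
    then obtain T :: "'n set" where T: "card T = k" by (meson obtain_subset_with_card_n)
    define v :: "real^'n" where "v = (\<chi> i. if i \<in> T then 1 else 0)"
    have "{i. v $ i \<noteq> 0} = T" by (auto simp: v_def)
    then have "v \<in> I_set k" using T by (auto simp: I_set_def v_def)
    then have "(r k / sqrt (real k)) *\<^sub>R v \<in> shell r k" unfolding shell_def by blast
    then show ?thesis using k memX by blast
  qed
  have part1: "euclidean_design 3 ?X w"
    unfolding euclidean_design_def
  proof (intro conjI allI impI)
    show "finite ?X" by (rule fin)
    show "0 \<notin> ?X" using nz by blast
    show "\<forall>x\<in>?X. 0 < w x" by (rule wpos)
    fix f :: "real^'n \<Rightarrow> real" assume f: "poly_fun_deg_le 3 f"
    show "(\<Sum>\<rho>\<in>norm ` ?X. (\<Sum>x\<in>{x\<in>?X. norm x = \<rho>}. w x) * sphere_avg f \<rho>) = (\<Sum>x\<in>?X. w x * f x)"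
      unfolding design_eq_iff[OF fin] by (rule Lf_poly3[OF rX rw sX sw f])
  qed
  have part2: "\<not> euclidean_design 9 ?X w"
  proof
    assume D: "euclidean_design 9 ?X w"
    obtain a :: 'n where True by blast
    have "card (UNIV - {a}) \<ge> 2" using card by (simp add: card_Diff_singleton)
    then obtain b where b: "b \<in> UNIV - {a}" by (metis card.empty ex_in_conv not_numeral_le_zero)
    then have ab: "a \<noteq> b" by auto
    have eq: "(\<Sum>\<rho>\<in>norm ` ?X. (\<Sum>x\<in>{x\<in>?X. norm x = \<rho>}. w x) * sphere_avg (g9 a b) \<rho>)
        = (\<Sum>x\<in>?X. w x * g9 a b x)"
      using D poly_g9[OF ab] unfolding euclidean_design_def by blast
    have "(\<Sum>x\<in>?X. w x * g9 a b x) = 0"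
      using memX g9_shell by (metis (no_types, lifting) mult_zero_right sum.neutral)
    moreover have "(\<Sum>\<rho>\<in>norm ` ?X. (\<Sum>x\<in>{x\<in>?X. norm x = \<rho>}. w x) * sphere_avg (g9 a b) \<rho>) > 0"
    proof (rule sum_pos)
      show "finite (norm ` ?X)" using fin by simp
      show "norm ` ?X \<noteq> {}" using Xne by simp
      fix \<rho> assume "\<rho> \<in> norm ` ?X"
      then obtain x0 where x0: "x0 \<in> ?X" "\<rho> = norm x0" by blast
      have "(\<Sum>x\<in>{x\<in>?X. norm x = \<rho>}. w x) > 0"
        by (rule sum_pos) (use fin x0 wpos in auto)
      moreover have "sphere_avg (g9 a b) \<rho> > 0"
        using sa_g9_pos[OF ab] nz[OF x0(1)] x0(2) by simp
      ultimately show "0 < (\<Sum>x\<in>{x\<in>?X. norm x = \<rho>}. w x) * sphere_avg (g9 a b) \<rho>" by simp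
    qed
    ultimately show False using eq by simp
  qed
  show ?thesis using part1 part2 by blast
qed


end
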